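(* Write $\dfrac{(q;q)_\infty^4}{(q^2;q^2)_\infty^2(q^4;q^4)_\infty}=\sum_{n\ge0}a_nq^n$. Then for all $n\ge0$: $a_n>0$ if $n\equiv0,2\pmod4$, $a_n<0$ if $n\equiv1\pmod4$, and $a_n=0$ if $n\equiv3\pmod4$.
   Context: For $|q|<1$, $(a;q)_\infty=\prod_{k\ge0}(1-aq^k)$. *)

theory Defs
  imports "HOL-Analysis.Analysis"
begin

definition qpoch_inf :: "real \<Rightarrow> real \<Rightarrow> real" where
  "qpoch_inf a q = (\<Prod>k. 1 - a * q ^ k)"

definition F :: "real \<Rightarrow> real" where
  "F q = qpoch_inf q q ^ 4 / (qpoch_inf (q\<^sup>2) (q\<^sup>2) ^ 2 * qpoch_inf (q ^ 4) (q ^ 4))"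

end

theory Submission
  imports Defs
begin


definition pf :: "real \<Rightarrow> real \<Rightarrow> nat \<Rightarrow> real" where
  "pf a r n = (\<Prod>k<n. 1 - a * r ^ k)"

lemma pf_Suc: "pf a r (Suc n) = pf a r n * (1 - a * r ^ n)"
  by (simp add: pf_def)

lemma pf_0 [simp]: "pf a r 0 = 1"
  by (simp add: pf_def)

lemma qp_conv:
  fixes a r :: real
  assumes "\<bar>r\<bar> < 1"
  shows "convergent_prod (\<lambda>k. 1 - a * r ^ k)"
proof -
  have "summable (\<lambda>k. \<bar>a\<bar> * \<bar>r\<bar> ^ k)"
    using assms by (auto intro!: summable_mult summable_geometric)
  then have "summable (\<lambda>k. norm ((1 - a * r ^ k) - 1))"
    by (simp add: abs_mult power_abs)
  then show ?thesis
    by (intro abs_convergent_prod_imp_convergent_prod summable_imp_abs_convergent_prod)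
qed

lemma qp_lim:
  assumes "\<bar>r\<bar> < 1"
  shows "(\<lambda>n. pf a r n) \<longlonglongrightarrow> qpoch_inf a r"
proof -
  have "(\<lambda>n. \<Prod>i\<le>n. 1 - a * r ^ i) \<longlonglongrightarrow> qpoch_inf a r"
    unfolding qpoch_inf_def by (rule convergent_prod_LIMSEQ[OF qp_conv[OF assms]])
  then have "(\<lambda>n. pf a r (Suc n)) \<longlonglongrightarrow> qpoch_inf a r"
    by (simp add: pf_def lessThan_Suc_atMost)
  then show ?thesis by (rule LIMSEQ_imp_Suc)
qed

lemma factor_pos:
  fixes a r :: real
  assumes "\<bar>a\<bar> < 1" "\<bar>r\<bar> < 1"
  shows "1 - a * r ^ k > 0"
proof -
  have "\<bar>r ^ k\<bar> \<le> 1" using assms by (simp add: power_abs power_le_one)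
  then have "\<bar>a * r ^ k\<bar> < 1" using assms
    by (simp add: abs_mult) (metis abs_ge_zero mult_less_le_imp_less mult.comm_neutral  mult_less_cancel_left1 order_le_less_trans not_less)
  then show ?thesis by linarith
qed

lemma qp_pos:
  assumes "\<bar>a\<bar> < 1" "\<bar>r\<bar> < 1"
  shows "qpoch_inf a r > 0"
  unfolding qpoch_inf_def
  by (rule less_0_prodinf[OF qp_conv[OF assms(2)]]) (use factor_pos[OF assms] in auto)

lemma pf_pos:
  assumes "\<bar>a\<bar> < 1" "\<bar>r\<bar> < 1"
  shows "pf a r n > 0"
  unfolding pf_def using factor_pos[OF assms] by (intro prod_pos) auto

lemma pf_ge:
  assumes "0 \<le> a" "a < 1" "0 \<le> r" "r < 1"
  shows "pf a r n \<ge> qpoch_inf a r" "pf a r n \<le> 1"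
proof -
  have f0: "\<And>k. 0 \<le> 1 - a * r ^ k" using factor_pos[of a r] assms by (auto intro: less_imp_le)
  have f1: "\<And>k. 1 - a * r ^ k \<le> 1" using assms by simp
  show "pf a r n \<ge> qpoch_inf a r"
    unfolding pf_def qpoch_inf_def
    by (rule prod_ge_prodinf[OF convergent_prod_has_prod[OF qp_conv]]) (use assms f0 f1 in auto)
  show "pf a r n \<le> 1" unfolding pf_def
    by (rule prod_le_1) (use f0 f1 in auto)
qed



fun qb :: "real \<Rightarrow> nat \<Rightarrow> nat \<Rightarrow> real" where
  "qb t 0 k = (if k = 0 then 1 else 0)"
| "qb t (Suc m) 0 = 1"
| "qb t (Suc m) (Suc k) = qb t m k + t ^ Suc k * qb t m (Suc k)"

lemma qb_gt: "m < k \<Longrightarrow> qb t m k = 0"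
proof (induction m arbitrary: k)
  case 0 then show ?case by simp
next
  case (Suc m)
  then obtain k' where "k = Suc k'" by (cases k) auto
  with Suc show ?case by simp
qed

lemma qb_0 [simp]: "qb t m 0 = 1"
  by (cases m) auto

lemma qb_diag: "qb t m m = 1"
  by (induction m) (auto simp: qb_gt)

lemma qb_closed: "k \<le> m \<Longrightarrow> qb t m k * pf t t k * pf t t (m - k) = pf t t m"
proof (induction m arbitrary: k)
  case 0 then show ?case by simp
next
  case (Suc m)
  show ?case
  proof (cases k)
    case 0 then show ?thesis by simp
  next
    case (Suc k')
    show ?thesis
    proof (cases "k' = m")
      case True
      show ?thesis using True Suc by (simp add: qb_gt pf_Suc qb_diag)
    next
      case False
      with Suc Suc.prems have km: "Suc k' \<le> m" by simp
      have h1: "qb t m k' * pf t t k' * pf t t (m - k') = pf t t m" using Suc.IH km by simp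
      have h2: "qb t m (Suc k') * pf t t (Suc k') * pf t t (m - Suc k') = pf t t m" using Suc.IH km by simp
      have e1: "pf t t (m - k') = pf t t (m - Suc k') * (1 - t * t ^ (m - Suc k'))"
        using km by (metis Suc_diff_Suc Suc_le_lessD pf_Suc)
      have e2: "t * t ^ (m - Suc k') * t ^ Suc k' = t ^ Suc m"
      proof -
        have "Suc (m - Suc k') + Suc k' = Suc m" using km by simp
        then show ?thesis by (metis power_Suc power_add)
      qed
      have "qb t (Suc m) k * pf t t k * pf t t (Suc m - k)
          = (qb t m k' + t ^ Suc k' * qb t m (Suc k')) * pf t t (Suc k') * pf t t (m - k')"
        using Suc by simp
      also have "\<dots> = qb t m k' * pf t t k' * pf t t (m - k') * (1 - t * t ^ k')
          + t ^ Suc k' * (qb t m (Suc k') * pf t t (Suc k') * pf t t (m - Suc k')) * (1 - t * t ^ (m - Suc k'))"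
        unfolding e1 pf_Suc by (simp only: algebra_simps)
      also have "\<dots> = pf t t m * (1 - t * t ^ k') + t ^ Suc k' * pf t t m * (1 - t * t ^ (m - Suc k'))"
        using h1 h2 by simp
      also have "\<dots> = pf t t m * (1 - t ^ Suc k' * (t * t ^ (m - Suc k')))"
        by (simp only: power_Suc algebra_simps)
      also have "\<dots> = pf t t m * (1 - t * t ^ m)"
        using e2 by (simp only: power_Suc[symmetric] mult.commute mult.left_commute)
      also have "\<dots> = pf t t (Suc m)" by (simp add: pf_Suc)
      finally show ?thesis .
    qed
  qed
qed

lemma exp_aux: "(s::real) ^ (k * (k - 1)) * (s ^ 2) ^ k = s ^ (Suc k * k)"
proof -
  have "k * (k - 1) + 2 * k = Suc k * k" by (cases k) auto
  then show ?thesis by (metis power_add power_mult)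
qed

lemma qbinom:
  fixes s x y :: real
  shows "(\<Prod>i<m. y + x * s ^ (2 * i)) = (\<Sum>k\<le>m. qb (s\<^sup>2) m k * s ^ (k * (k - 1)) * x ^ k * y ^ (m - k))"
proof (induction m arbitrary: x)
  case 0 then show ?case by simp
next
  case (Suc m)
  define A where "A = (\<Sum>k\<le>m. qb (s\<^sup>2) m k * s ^ (k * (k - 1)) * (x * s\<^sup>2) ^ k * y ^ (m - k))"
  have "(\<Prod>i<Suc m. y + x * s ^ (2 * i)) = (y + x) * (\<Prod>i<m. y + (x * s\<^sup>2) * s ^ (2 * i))"
  proof -
    have e: "s ^ (2 * Suc i) = s\<^sup>2 * s ^ (2 * i)" for i
      by (simp add: power_add[symmetric])
    show ?thesis by (subst prod.lessThan_Suc_shift) (simp only: e mult.assoc mult_zero_right power_0 add_0_right mult_1_right)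
  qed
  also have "\<dots> = (y + x) * A" using Suc.IH[of "x * s\<^sup>2"] by (simp add: A_def)
  also have "\<dots> = y * A + x * A" by (simp add: algebra_simps)
  also have "x * A = (\<Sum>j\<le>m. qb (s\<^sup>2) m j * s ^ (Suc j * j) * x ^ Suc j * y ^ (m - j))"
    unfolding A_def sum_distrib_left
  proof (rule sum.cong[OF refl])
    fix k assume "k \<in> {..m}"
    have "x * (qb (s\<^sup>2) m k * s ^ (k * (k - 1)) * (x * s\<^sup>2) ^ k * y ^ (m - k))
        = qb (s\<^sup>2) m k * (s ^ (k * (k - 1)) * (s\<^sup>2) ^ k) * (x * x ^ k) * y ^ (m - k)"
      by (simp only: power_mult_distrib mult.assoc mult.commute mult.left_commute)
    also have "\<dots> = qb (s\<^sup>2) m k * s ^ (Suc k * k) * x ^ Suc k * y ^ (m - k)"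
      by (simp only: exp_aux power_Suc)
    finally show "x * (qb (s\<^sup>2) m k * s ^ (k * (k - 1)) * (x * s\<^sup>2) ^ k * y ^ (m - k))
        = qb (s\<^sup>2) m k * s ^ (Suc k * k) * x ^ Suc k * y ^ (m - k)" .
  qed
  also have "y * A = (\<Sum>k\<le>m. qb (s\<^sup>2) m k * s ^ (Suc k * k) * x ^ k * y ^ (Suc m - k))"
    unfolding A_def sum_distrib_left
  proof (rule sum.cong[OF refl])
    fix k assume "k \<in> {..m}"
    then have ey: "y * y ^ (m - k) = y ^ (Suc m - k)" by (simp add: Suc_diff_le)
    have "y * (qb (s\<^sup>2) m k * s ^ (k * (k - 1)) * (x * s\<^sup>2) ^ k * y ^ (m - k))
        = qb (s\<^sup>2) m k * (s ^ (k * (k - 1)) * (s\<^sup>2) ^ k) * x ^ k * (y * y ^ (m - k))"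
      by (simp only: power_mult_distrib mult.assoc mult.commute mult.left_commute)
    also have "\<dots> = qb (s\<^sup>2) m k * s ^ (Suc k * k) * x ^ k * y ^ (Suc m - k)"
      by (simp only: exp_aux ey)
    finally show "y * (qb (s\<^sup>2) m k * s ^ (k * (k - 1)) * (x * s\<^sup>2) ^ k * y ^ (m - k))
        = qb (s\<^sup>2) m k * s ^ (Suc k * k) * x ^ k * y ^ (Suc m - k)" .
  qed
  also have "\<dots> = (\<Sum>k\<le>Suc m. qb (s\<^sup>2) m k * s ^ (Suc k * k) * x ^ k * y ^ (Suc m - k))"
    by (simp add: qb_gt)
  also have "\<dots> = y ^ Suc m + (\<Sum>j\<le>m. qb (s\<^sup>2) m (Suc j) * s ^ (Suc (Suc j) * Suc j) * x ^ Suc j * y ^ (m - j))"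
    by (subst sum.atMost_Suc_shift) simp
  finally have L: "(\<Prod>i<Suc m. y + x * s ^ (2 * i)) = y ^ Suc m
     + (\<Sum>j\<le>m. qb (s\<^sup>2) m (Suc j) * s ^ (Suc (Suc j) * Suc j) * x ^ Suc j * y ^ (m - j))
     + (\<Sum>j\<le>m. qb (s\<^sup>2) m j * s ^ (Suc j * j) * x ^ Suc j * y ^ (m - j))" .
  have "(\<Sum>k\<le>Suc m. qb (s\<^sup>2) (Suc m) k * s ^ (k * (k - 1)) * x ^ k * y ^ (Suc m - k))
      = y ^ Suc m + (\<Sum>j\<le>m. qb (s\<^sup>2) (Suc m) (Suc j) * s ^ (Suc j * j) * x ^ Suc j * y ^ (m - j))"
    by (subst sum.atMost_Suc_shift) simp
  also have "(\<Sum>j\<le>m. qb (s\<^sup>2) (Suc m) (Suc j) * s ^ (Suc j * j) * x ^ Suc j * y ^ (m - j))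
     = (\<Sum>j\<le>m. qb (s\<^sup>2) m (Suc j) * s ^ (Suc (Suc j) * Suc j) * x ^ Suc j * y ^ (m - j))
     + (\<Sum>j\<le>m. qb (s\<^sup>2) m j * s ^ (Suc j * j) * x ^ Suc j * y ^ (m - j))"
  proof -
    have e: "(s\<^sup>2) ^ Suc j * s ^ (Suc j * j) = s ^ (Suc (Suc j) * Suc j)" for j
      using exp_aux[of s "Suc j"] by (simp add: mult.commute)
    have "qb (s\<^sup>2) (Suc m) (Suc j) * s ^ (Suc j * j) * x ^ Suc j * y ^ (m - j)
       = qb (s\<^sup>2) m (Suc j) * ((s\<^sup>2) ^ Suc j * s ^ (Suc j * j)) * x ^ Suc j * y ^ (m - j)
       + qb (s\<^sup>2) m j * s ^ (Suc j * j) * x ^ Suc j * y ^ (m - j)" for j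
      by (simp only: qb.simps(3) distrib_right distrib_left mult.assoc mult.commute mult.left_commute add.commute)
    then have "qb (s\<^sup>2) (Suc m) (Suc j) * s ^ (Suc j * j) * x ^ Suc j * y ^ (m - j)
       = qb (s\<^sup>2) m (Suc j) * s ^ (Suc (Suc j) * Suc j) * x ^ Suc j * y ^ (m - j)
       + qb (s\<^sup>2) m j * s ^ (Suc j * j) * x ^ Suc j * y ^ (m - j)" for j
      by (simp only: e)
    then show ?thesis
      by (simp only: sum.distrib[symmetric])
  qed
  finally show ?case using L by simp
qed



lemma prod_split_add: "(\<Prod>i<m + (n::nat). g i) = (\<Prod>i<m. g i) * (\<Prod>i<n. g (m + i))"
  by (induction n) (auto simp: mult.assoc)

lemma sum_split_add: "(\<Sum>i\<le>m + (n::nat). g i) = (\<Sum>i<m. g i) + (\<Sum>i\<le>n. g (m + i))"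
proof (induction n)
  case 0 then show ?case by (simp add: lessThan_Suc_atMost[symmetric])
next
  case (Suc n) then show ?case by (simp add: add.assoc)
qed

definition D :: "nat \<Rightarrow> nat \<Rightarrow> nat" where "D k n = (k - n)\<^sup>2 + (n - k)\<^sup>2"

lemma exp_id:
  assumes "k \<le> 2 * n"
  shows "k * (k - 1) + k + 2 * n * (2 * n - k) = D k n + 3 * n * n"
proof -
  have kk: "k * (k - 1) + k = k * k" by (cases k) auto
  show ?thesis
  proof (cases "k \<le> n")
    case True
    then obtain d where d: "n = k + d" using le_Suc_ex by blast
    have "2 * n - k = k + 2 * d" using d by simp
    then show ?thesis unfolding kk D_def using d by (simp add: algebra_simps power2_eq_square)
  next
    case False
    then obtain d where d: "k = n + d" using le_Suc_ex[of n k] by auto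
    with assms have "d \<le> n" by simp
    then have "2 * n - k = n - d" using d by simp
    moreover obtain e where "n = d + e" using \<open>d \<le> n\<close> le_Suc_ex by blast
    ultimately show ?thesis unfolding kk D_def using d by (simp add: algebra_simps power2_eq_square)
  qed
qed

lemma sum_odd: "(\<Sum>l<n. 2 * (n - Suc l) + 1) = n * n"
proof -
  have "(\<Sum>l<n. 2 * (n - Suc l) + 1) = (\<Sum>l<n. 2 * l + 1)"
    by (rule sum.nat_diff_reindex)
  also have "\<dots> = n * n" by (induction n) auto
  finally show ?thesis .
qed

lemma lhs_prod:
  fixes q :: real
  shows "(\<Prod>i<2 * n. q ^ (2 * n) + (- q) * q ^ (2 * i)) = (- 1) ^ n * q ^ (3 * n * n) * (pf q (q\<^sup>2) n)\<^sup>2"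
proof -
  let ?g = "\<lambda>i. q ^ (2 * n) + (- q) * q ^ (2 * i)"
  have "(\<Prod>i<2 * n. ?g i) = (\<Prod>i<n. ?g i) * (\<Prod>i<n. ?g (n + i))"
    using prod_split_add[of ?g n n] by (simp add: mult_2)
  also have "(\<Prod>i<n. ?g (n + i)) = (\<Prod>i<n. q ^ (2 * n) * (1 - q * (q\<^sup>2) ^ i))"
  proof (rule prod.cong[OF refl])
    fix i assume "i \<in> {..<n}"
    have "q ^ (2 * (n + i)) = q ^ (2 * n) * (q\<^sup>2) ^ i" by (simp add: power_add power_mult)
    then show "?g (n + i) = q ^ (2 * n) * (1 - q * (q\<^sup>2) ^ i)" by (simp add: algebra_simps)
  qed
  also have "\<dots> = q ^ (2 * n * n) * pf q (q\<^sup>2) n"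
    by (simp add: prod.distrib pf_def power_mult)
  also have "(\<Prod>i<n. ?g i) = (\<Prod>l<n. ?g (n - Suc l))"
    by (rule prod.nat_diff_reindex[symmetric])
  also have "\<dots> = (\<Prod>l<n. (- 1) * q ^ (2 * (n - Suc l) + 1) * (1 - q * (q\<^sup>2) ^ l))"
  proof (rule prod.cong[OF refl])
    fix l assume "l \<in> {..<n}"
    then have e: "2 * (n - Suc l) + 1 + (2 * l + 1) = 2 * n" by simp
    have h1: "q ^ (2 * n) = q ^ (2 * (n - Suc l) + 1) * q ^ (2 * l + 1)"
      by (simp only: e[symmetric] power_add)
    have h2: "(- q) * q ^ (2 * (n - Suc l)) = - (q ^ (2 * (n - Suc l) + 1))" by simp
    have h3: "q * (q\<^sup>2) ^ l = q ^ (2 * l + 1)" by (simp add: power_mult)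
    have gen: "\<And>A B::real. A * B + - A = (- 1) * A * (1 - B)" by (simp add: algebra_simps)
    show "?g (n - Suc l) = (- 1) * q ^ (2 * (n - Suc l) + 1) * (1 - q * (q\<^sup>2) ^ l)"
      by (simp only: h1 h2 h3 gen)
  qed
  also have "\<dots> = (- 1) ^ n * q ^ (n * n) * pf q (q\<^sup>2) n"
  proof -
    have "(\<Prod>l<n. (- 1) * q ^ (2 * (n - Suc l) + 1) * (1 - q * (q\<^sup>2) ^ l))
       = (\<Prod>l<n. (- 1::real)) * (\<Prod>l<n. q ^ (2 * (n - Suc l) + 1)) * (\<Prod>l<n. 1 - q * (q\<^sup>2) ^ l)"
      by (simp only: prod.distrib)
    also have "\<dots> = (- 1) ^ n * q ^ (n * n) * pf q (q\<^sup>2) n"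
      by (simp only: prod_constant card_lessThan power_sum[symmetric] sum_odd pf_def)
    finally show ?thesis .
  qed
  finally show ?thesis
    by (simp add: power2_eq_square algebra_simps power_add[symmetric])
qed

lemma fin_gauss:
  fixes q :: real
  assumes q: "q \<noteq> 0"
  shows "(pf q (q\<^sup>2) n)\<^sup>2 = (\<Sum>k\<le>2*n. (- 1) ^ (k + n) * qb (q\<^sup>2) (2*n) k * q ^ D k n)"
proof -
  have Q: "(\<Prod>i<2*n. q ^ (2*n) + (- q) * q ^ (2 * i))
     = (\<Sum>k\<le>2*n. qb (q\<^sup>2) (2*n) k * q ^ (k * (k - 1)) * (- q) ^ k * (q ^ (2*n)) ^ (2*n - k))"
    by (rule qbinom)
  have T: "qb (q\<^sup>2) (2*n) k * q ^ (k * (k - 1)) * (- q) ^ k * (q ^ (2*n)) ^ (2*n - k)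
       = q ^ (3*n*n) * ((- 1) ^ k * qb (q\<^sup>2) (2*n) k * q ^ D k n)" if "k \<in> {..2*n}" for k
  proof -
    have "q ^ (k * (k - 1)) * q ^ k * (q ^ (2*n)) ^ (2*n - k) = q ^ (k * (k - 1) + k + 2 * n * (2 * n - k))"
      by (simp only: power_add power_mult)
    also have "\<dots> = q ^ (3*n*n) * q ^ D k n"
    proof -
      have "k * (k - 1) + k + 2 * n * (2 * n - k) = 3*n*n + D k n" using that exp_id[of k n] by simp
      then show ?thesis by (simp only: power_add)
    qed
    finally have e: "q ^ (k * (k - 1)) * q ^ k * (q ^ (2*n)) ^ (2*n - k) = q ^ (3*n*n) * q ^ D k n" .
    have "qb (q\<^sup>2) (2*n) k * q ^ (k * (k - 1)) * (- q) ^ k * (q ^ (2*n)) ^ (2*n - k)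
       = (- 1) ^ k * qb (q\<^sup>2) (2*n) k * (q ^ (k * (k - 1)) * q ^ k * (q ^ (2*n)) ^ (2*n - k))"
      by (simp only: power_minus[of q k] mult_ac)
    also have "\<dots> = q ^ (3*n*n) * ((- 1) ^ k * qb (q\<^sup>2) (2*n) k * q ^ D k n)"
      unfolding e by (simp only: mult_ac)
    finally show ?thesis .
  qed
  have "(- 1) ^ n * q ^ (3 * n * n) * (pf q (q\<^sup>2) n)\<^sup>2
      = q ^ (3*n*n) * (\<Sum>k\<le>2*n. (- 1) ^ k * qb (q\<^sup>2) (2*n) k * q ^ D k n)"
    proof -
    have "(- 1) ^ n * q ^ (3 * n * n) * (pf q (q\<^sup>2) n)\<^sup>2
       = (\<Sum>k\<le>2*n. qb (q\<^sup>2) (2*n) k * q ^ (k * (k - 1)) * (- q) ^ k * (q ^ (2*n)) ^ (2*n - k))"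
      using lhs_prod[of q n] Q by simp
    also have "\<dots> = (\<Sum>k\<le>2*n. q ^ (3*n*n) * ((- 1) ^ k * qb (q\<^sup>2) (2*n) k * q ^ D k n))"
      by (rule sum.cong[OF refl T])
    finally show ?thesis by (simp only: sum_distrib_left)
  qed
  then have "(- 1) ^ n * (pf q (q\<^sup>2) n)\<^sup>2 = (\<Sum>k\<le>2*n. (- 1) ^ k * qb (q\<^sup>2) (2*n) k * q ^ D k n)"
    using q by (simp add: mult.assoc)
  then have "(pf q (q\<^sup>2) n)\<^sup>2 = (- 1) ^ n * (\<Sum>k\<le>2*n. (- 1) ^ k * qb (q\<^sup>2) (2*n) k * q ^ D k n)"
    proof -
    have "(pf q (q\<^sup>2) n)\<^sup>2 = ((- 1) ^ n * (- 1) ^ n) * (pf q (q\<^sup>2) n)\<^sup>2"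
      by (simp add: power_mult_distrib[symmetric])
    then show ?thesis using \<open>(- 1) ^ n * (pf q (q\<^sup>2) n)\<^sup>2 = _\<close> by (simp only: mult.assoc)
  qed
  also have "\<dots> = (\<Sum>k\<le>2*n. (- 1) ^ (k + n) * qb (q\<^sup>2) (2*n) k * q ^ D k n)"
    by (simp add: sum_distrib_left power_add mult_ac)
  finally show ?thesis .
qed



lemma qb_div:
  assumes "0 \<le> t" "t < 1" "k \<le> m"
  shows "qb t m k = pf t t m / (pf t t k * pf t t (m - k))"
proof -
  have "pf t t k > 0" "pf t t (m - k) > 0" using assms pf_pos[of t t] by auto
  then show ?thesis using qb_closed[OF assms(3), of t] by (simp add: field_simps)
qed

lemma qb_sym:
  assumes "0 \<le> t" "t < 1" "k \<le> m"
  shows "qb t m (m - k) = qb t m k"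
  using assms by (simp add: qb_div mult.commute)

definition w :: "nat \<Rightarrow> real" where "w j = (if j = 0 then 1 else 2)"

lemma neg1_pow_2n: "(- 1 :: real) ^ (n + j + n) = (- 1) ^ j"
proof -
  have "n + j + n = j + 2 * n" by simp
  then show ?thesis by (simp only: power_add power_mult) simp
qed

lemma fin_gauss2:
  fixes q :: real
  assumes q: "q \<noteq> 0" "\<bar>q\<bar> < 1"
  shows "(pf q (q\<^sup>2) n)\<^sup>2 = (\<Sum>j\<le>n. w j * ((- 1) ^ j * qb (q\<^sup>2) (2*n) (n + j) * q ^ (j\<^sup>2)))"
proof -
  define g where "g k = (- 1) ^ (k + n) * qb (q\<^sup>2) (2*n) k * q ^ D k n" for k
  have t: "0 \<le> q\<^sup>2" "q\<^sup>2 < 1" using q(2) abs_square_less_1 by auto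
  have gj: "g (n + j) = (- 1) ^ j * qb (q\<^sup>2) (2*n) (n + j) * q ^ (j\<^sup>2)" for j
    unfolding g_def D_def by (simp add: neg1_pow_2n)
  have gs: "g (n - Suc j) = g (n + Suc j)" if "j < n" for j
  proof -
    have "qb (q\<^sup>2) (2*n) (n - Suc j) = qb (q\<^sup>2) (2*n) (2*n - (n - Suc j))"
      using qb_sym[OF t, of "n - Suc j" "2*n"] by simp
    also have "2*n - (n - Suc j) = n + Suc j" using that by simp
    finally have e1: "qb (q\<^sup>2) (2*n) (n - Suc j) = qb (q\<^sup>2) (2*n) (n + Suc j)" .
    have e2: "D (n - Suc j) n = D (n + Suc j) n" unfolding D_def using that by simp
    have e3: "(- 1 :: real) ^ (n - Suc j + n) = (- 1) ^ (n + Suc j + n)"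
    proof -
      have "n + Suc j + n = (n - Suc j + n) + 2 * Suc j" using that by simp
      then show ?thesis by (simp only: power_add power_mult) simp
    qed
    show ?thesis unfolding g_def e1 e2 e3 ..
  qed
  have "(pf q (q\<^sup>2) n)\<^sup>2 = (\<Sum>k\<le>n + n. g k)"
    using fin_gauss[OF q(1), of n] by (simp add: g_def mult_2)
  also have "\<dots> = (\<Sum>k<n. g k) + (\<Sum>j\<le>n. g (n + j))" by (rule sum_split_add)
  also have "(\<Sum>k<n. g k) = (\<Sum>j<n. g (n - Suc j))" by (rule sum.nat_diff_reindex[symmetric])
  also have "\<dots> = (\<Sum>j<n. g (n + Suc j))" by (rule sum.cong[OF refl]) (simp add: gs)
  also have "(\<Sum>j\<le>n. g (n + j)) = g n + (\<Sum>j<n. g (n + Suc j))" by (subst sum.atMost_shift) simp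
  finally have L: "(pf q (q\<^sup>2) n)\<^sup>2 = g n + (\<Sum>j<n. 2 * g (n + Suc j))"
    by (simp add: sum.distrib[symmetric] sum_distrib_left[symmetric])
  have "(\<Sum>j\<le>n. w j * ((- 1) ^ j * qb (q\<^sup>2) (2*n) (n + j) * q ^ (j\<^sup>2))) = (\<Sum>j\<le>n. w j * g (n + j))"
    by (simp add: gj)
  also have "\<dots> = g n + (\<Sum>j<n. 2 * g (n + Suc j))" by (subst sum.atMost_shift) (simp add: w_def)
  finally show ?thesis using L by simp
qed



definition theta :: "real \<Rightarrow> real" where
  "theta q = (\<Sum>j. w j * ((- 1) ^ j * q ^ (j\<^sup>2)))"

lemma w_bound: "0 \<le> w j" "w j \<le> 2"
  by (auto simp: w_def)

lemma pow_sq_le: "\<bar>q::real\<bar> \<le> 1 \<Longrightarrow> \<bar>q ^ (j\<^sup>2)\<bar> \<le> \<bar>q\<bar> ^ j"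
  by (simp add: power_abs) (rule power_decreasing, auto simp: power2_eq_square)

lemma theta_summable:
  assumes "\<bar>q::real\<bar> < 1"
  shows "summable (\<lambda>j. w j * ((- 1) ^ j * q ^ (j\<^sup>2)))"
proof (rule summable_comparison_test)
  show "summable (\<lambda>j. 2 * \<bar>q\<bar> ^ j)" using assms by (auto intro!: summable_mult summable_geometric)
  show "\<exists>N. \<forall>n\<ge>N. norm (w n * ((- 1) ^ n * q ^ n\<^sup>2)) \<le> 2 * \<bar>q\<bar> ^ n"
  proof (intro exI allI impI)
    fix n :: nat
    have "norm (w n * ((- 1) ^ n * q ^ n\<^sup>2)) = w n * \<bar>q ^ n\<^sup>2\<bar>"
      using w_bound[of n] by (simp add: abs_mult power_abs)
    also have "\<dots> \<le> 2 * \<bar>q\<bar> ^ n"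
      using w_bound[of n] pow_sq_le[of q n] assms by (intro mult_mono) auto
    finally show "norm (w n * ((- 1) ^ n * q ^ n\<^sup>2)) \<le> 2 * \<bar>q\<bar> ^ n" .
  qed
qed

lemma gauss:
  fixes q :: real
  assumes q: "q \<noteq> 0" "\<bar>q\<bar> < 1"
  shows "(qpoch_inf q (q\<^sup>2))\<^sup>2 = theta q / qpoch_inf (q\<^sup>2) (q\<^sup>2)"
proof -
  define t where "t = q\<^sup>2"
  have t: "0 \<le> t" "t < 1" using q(2) abs_square_less_1 by (auto simp: t_def)
  have t': "\<bar>t\<bar> < 1" using t by simp
  define P where "P = qpoch_inf t t"
  have P: "P > 0" using qp_pos[OF t' t'] by (simp add: P_def)
  have pfP: "P \<le> pf t t m" "pf t t m \<le> 1" "0 < pf t t m" for m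
    using pf_ge[of t t m] pf_pos[OF t' t', of m] t by (auto simp: P_def)
  define a where "a j n = (if j \<le> n then w j * ((- 1) ^ j * qb t (2*n) (n + j) * q ^ (j\<^sup>2)) else 0)" for j n
  define b where "b j = w j * ((- 1) ^ j * (1 / P) * q ^ (j\<^sup>2))" for j
  define M where "M j = 2 * \<bar>q\<bar> ^ j / (P * P)" for j
  have qbdiv: "qb t (2*n) (n + j) = pf t t (2*n) / (pf t t (n + j) * pf t t (n - j))" if "j \<le> n" for j n
    using qb_div[OF t, of "n + j" "2*n"] that by simp
  have lim_pf: "(\<lambda>n. pf t t n) \<longlonglongrightarrow> P" unfolding P_def by (rule qp_lim[OF t'])
  have lim_a: "(\<lambda>n. a j n) \<longlonglongrightarrow> b j" for j
  proof -
    have l1: "(\<lambda>n. pf t t (2*n)) \<longlonglongrightarrow> P"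
      using LIMSEQ_subseq_LIMSEQ[OF lim_pf, of "\<lambda>n. 2*n"] by (simp add: strict_mono_def o_def)
    have l2: "(\<lambda>n. pf t t (n + j)) \<longlonglongrightarrow> P" by (rule LIMSEQ_ignore_initial_segment[OF lim_pf])
    have l3: "(\<lambda>n. pf t t (n - j)) \<longlonglongrightarrow> P"
      by (rule filterlim_compose[OF lim_pf filterlim_minus_const_nat_at_top])
    have "(\<lambda>n. w j * ((- 1) ^ j * (pf t t (2*n) / (pf t t (n + j) * pf t t (n - j))) * q ^ (j\<^sup>2)))
          \<longlonglongrightarrow> w j * ((- 1) ^ j * (P / (P * P)) * q ^ (j\<^sup>2))"
      using P by (intro tendsto_intros l1 l2 l3) auto
    moreover have "P / (P * P) = 1 / P" using P by simp
    moreover have "\<forall>\<^sub>F n in sequentially. w j * ((- 1) ^ j * (pf t t (2*n) / (pf t t (n + j) * pf t t (n - j))) * q ^ (j\<^sup>2)) = a j n"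
      using eventually_ge_at_top[of j] by eventually_elim (simp add: a_def qbdiv)
    ultimately show ?thesis unfolding b_def by (auto intro: Lim_transform_eventually)
  qed
  have bound: "norm (a j n) \<le> M j" for j n
  proof (cases "j \<le> n")
    case True
    have "0 < pf t t (2*n) / (pf t t (n + j) * pf t t (n - j))"
      using pfP by (intro divide_pos_pos mult_pos_pos) auto
    then have qb0: "0 \<le> qb t (2*n) (n + j)" using True by (simp add: qbdiv)
    have "qb t (2*n) (n + j) \<le> 1 / (P * P)"
    proof -
      have "qb t (2*n) (n + j) = pf t t (2*n) / (pf t t (n + j) * pf t t (n - j))" using qbdiv True by simp
      also have "\<dots> \<le> 1 / (pf t t (n + j) * pf t t (n - j))"
        using pfP by (intro divide_right_mono) (auto intro: mult_nonneg_nonneg less_imp_le)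
      also have "\<dots> \<le> 1 / (P * P)"
        using pfP P by (intro divide_left_mono mult_mono) (auto intro: mult_pos_pos less_imp_le)
      finally show ?thesis .
    qed
    then have "norm (a j n) = w j * qb t (2*n) (n + j) * \<bar>q ^ (j\<^sup>2)\<bar>"
      using True qb0 w_bound[of j] by (simp add: a_def abs_mult)
    also have "\<dots> \<le> 2 * (1 / (P * P)) * \<bar>q\<bar> ^ j"
      using w_bound[of j] qb0 \<open>qb t (2*n) (n + j) \<le> 1 / (P * P)\<close> pow_sq_le[of q j] q
      by (intro mult_mono) auto
    finally show ?thesis by (simp add: M_def)
  next
    case False then show ?thesis using P by (simp add: a_def M_def)
  qed
  have sM: "summable M" unfolding M_def using q
    by (auto intro!: summable_divide summable_mult summable_geometric)
  have T: "(\<lambda>n. suminf (\<lambda>j. a j n)) \<longlonglongrightarrow> suminf b"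
  proof -
    have ev: "eventually (\<lambda>(k,n). norm (a k n) \<le> M k) (at_top \<times>\<^sub>F sequentially)"
      by (intro always_eventually) (auto simp: bound[unfolded real_norm_def])
    show ?thesis using tannerys_theorem[where a=a and b=b and M=M and F=sequentially, OF lim_a ev sM] by simp
  qed
  have "suminf (\<lambda>j. a j n) = (pf q t n)\<^sup>2" for n
  proof -
    have "suminf (\<lambda>j. a j n) = (\<Sum>j\<le>n. a j n)" by (rule suminf_finite) (auto simp: a_def)
    also have "\<dots> = (pf q t n)\<^sup>2" using fin_gauss2[OF q, of n] by (simp add: a_def t_def)
    finally show ?thesis .
  qed
  with T have T2: "(\<lambda>n. (pf q t n)\<^sup>2) \<longlonglongrightarrow> suminf b" by simp
  have T3: "(\<lambda>n. (pf q t n)\<^sup>2) \<longlonglongrightarrow> (qpoch_inf q t)\<^sup>2"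
    using qp_lim[OF t'] by (intro tendsto_intros)
  have "suminf b = theta q / P"
  proof -
    have "suminf b = (\<Sum>j. w j * ((- 1) ^ j * q ^ (j\<^sup>2)) * (1 / P))"
      unfolding b_def by (simp add: mult_ac)
    also have "\<dots> = theta q * (1 / P)" unfolding theta_def
      by (rule suminf_mult2[symmetric, OF theta_summable[OF q(2)]])
    finally show ?thesis by simp
  qed
  with LIMSEQ_unique[OF T3 T2] show ?thesis by (simp add: P_def t_def)
qed



lemma pf_split: "pf q q (2*n) = pf q (q\<^sup>2) n * pf (q\<^sup>2) (q\<^sup>2) n"
proof (induction n)
  case 0 then show ?case by simp
next
  case (Suc n)
  have "pf q q (2 * Suc n) = pf q q (2*n) * (1 - q * q ^ (2*n)) * (1 - q * q ^ Suc (2*n))"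
    by (simp add: pf_Suc)
  also have "q * q ^ (2*n) = q * (q\<^sup>2) ^ n" by (simp add: power_mult)
  also have "q * q ^ Suc (2*n) = q\<^sup>2 * (q\<^sup>2) ^ n" by (simp add: power_mult power2_eq_square)
  finally show ?case using Suc by (simp add: pf_Suc mult_ac)
qed

lemma qp_split:
  assumes "\<bar>q::real\<bar> < 1"
  shows "qpoch_inf q q = qpoch_inf q (q\<^sup>2) * qpoch_inf (q\<^sup>2) (q\<^sup>2)"
proof -
  have t': "\<bar>q\<^sup>2\<bar> < 1" using assms abs_square_less_1 by auto
  have "(\<lambda>n. pf q q (2*n)) \<longlonglongrightarrow> qpoch_inf q q"
    using LIMSEQ_subseq_LIMSEQ[OF qp_lim[OF assms], of "\<lambda>n. 2*n"] by (simp add: strict_mono_def o_def)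
  moreover have "(\<lambda>n. pf q q (2*n)) \<longlonglongrightarrow> qpoch_inf q (q\<^sup>2) * qpoch_inf (q\<^sup>2) (q\<^sup>2)"
    unfolding pf_split by (intro tendsto_intros qp_lim t')
  ultimately show ?thesis by (rule LIMSEQ_unique)
qed

lemma F_eq:
  fixes q :: real
  assumes q: "q \<noteq> 0" "\<bar>q\<bar> < 1"
  shows "F q = (theta q)\<^sup>2 / qpoch_inf (q ^ 4) (q ^ 4)"
proof -
  have t': "\<bar>q\<^sup>2\<bar> < 1" using q abs_square_less_1 by auto
  define Od where "Od = qpoch_inf q (q\<^sup>2)"
  define P2 where "P2 = qpoch_inf (q\<^sup>2) (q\<^sup>2)"
  have P2: "P2 \<noteq> 0" using qp_pos[OF t' t'] by (simp add: P2_def)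
  have th: "theta q = Od\<^sup>2 * P2" using gauss[OF q] P2 by (simp add: Od_def P2_def field_simps)
  have P1: "qpoch_inf q q = Od * P2" using qp_split[OF q(2)] by (simp add: Od_def P2_def)
  have "F q = (Od * P2) ^ 4 / (P2 ^ 2 * qpoch_inf (q ^ 4) (q ^ 4))"
    unfolding F_def P1 P2_def ..
  also have "(Od * P2) ^ 4 = (theta q)\<^sup>2 * P2 ^ 2" unfolding th by algebra
  finally show ?thesis using P2 by simp
qed



fun pc :: "nat \<Rightarrow> nat \<Rightarrow> real" where
  "pc 0 n = (if n = 0 then 1 else 0)"
| "pc (Suc m) n = (\<Sum>i\<le>n. pc m i * (if Suc m dvd (n - i) then 1 else 0))"

lemma pc_nonneg: "0 \<le> pc m n"
  by (induction m arbitrary: n) (auto intro!: sum_nonneg)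

lemma pc_mono_Suc: "pc m n \<le> pc (Suc m) n"
proof -
  have "pc m n * (if Suc m dvd (n - n) then 1 else 0) \<le> (\<Sum>i\<le>n. pc m i * (if Suc m dvd (n - i) then 1 else 0))"
    by (rule member_le_sum) (auto simp: pc_nonneg)
  then show ?thesis by simp
qed

lemma pc_mono: "m \<le> m' \<Longrightarrow> pc m n \<le> pc m' n"
  using lift_Suc_mono_le[of "\<lambda>m. pc m n", OF pc_mono_Suc] by blast

lemma pc_stable:
  assumes "n \<le> m"
  shows "pc (Suc m) n = pc m n"
proof -
  have z: "(\<Sum>i<n. pc m i * (if Suc m dvd (n - i) then 1 else 0)) = 0"
  proof (rule sum.neutral, intro ballI)
    fix i assume "i \<in> {..<n}"
    then have "0 < n - i" "n - i < Suc m" using assms by auto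
    then have "\<not> Suc m dvd (n - i)" using nat_dvd_not_less by blast
    then show "pc m i * (if Suc m dvd (n - i) then 1 else 0) = 0" by simp
  qed
  have "pc (Suc m) n = (\<Sum>i<Suc n. pc m i * (if Suc m dvd (n - i) then 1 else 0))"
    by (simp add: lessThan_Suc_atMost)
  also have "\<dots> = pc m n" by (subst sum.lessThan_Suc) (simp add: z)
  finally show ?thesis .
qed

definition pd :: "nat \<Rightarrow> real" where "pd n = pc n n"

lemma pc_eq_pd: "n \<le> m \<Longrightarrow> pc m n = pd n"
proof (induction m rule: dec_induct)
  case base then show ?case by (simp add: pd_def)
next
  case (step m) then show ?case using pc_stable[of n m] by simp
qed

lemma pc_one: "pc (Suc 0) n = 1"
proof -
  have "pc (Suc 0) n = (\<Sum>i<Suc n. pc 0 i)" by (simp add: lessThan_Suc_atMost)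
  also have "\<dots> = 1" by (induction n) auto
  finally show ?thesis .
qed

lemma pd_ge1: "1 \<le> pd n"
proof (cases n)
  case 0 then show ?thesis by (simp add: pd_def)
next
  case (Suc k)
  then have "pc (Suc 0) n \<le> pc n n" by (intro pc_mono) simp
  then show ?thesis by (simp add: pd_def pc_one)
qed

lemma pc_le_pd: "pc m n \<le> pd n"
  using pc_mono[of m "max m n" n] pc_eq_pd[of n "max m n"] by simp

lemma geom_dvd_sums:
  fixes t :: real
  assumes "0 \<le> t" "t < 1" "0 < k"
  shows "(\<lambda>n. (if k dvd n then 1 else 0) * t ^ n) sums (1 / (1 - t ^ k))"
proof -
  have tk: "norm (t ^ k) < 1" using assms by (simp add: power_less_one_iff)
  have "(\<lambda>j. (t ^ k) ^ j) sums (1 / (1 - t ^ k))" by (rule geometric_sums[OF tk])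
  moreover have "(\<lambda>j. (if k dvd (k * j) then 1 else 0) * t ^ (k * j)) = (\<lambda>j. (t ^ k) ^ j)"
    by (simp add: power_mult)
  ultimately have "(\<lambda>j. (\<lambda>n. (if k dvd n then 1 else 0) * t ^ n) (k * j)) sums (1 / (1 - t ^ k))" by simp
  then show ?thesis
    by (subst (asm) sums_mono_reindex) (auto simp: strict_mono_def assms(3) elim!: dvdE)
qed

lemma pc_sums:
  fixes t :: real
  assumes t: "0 \<le> t" "t < 1"
  shows "(\<lambda>n. pc m n * t ^ n) sums (1 / pf t t m)"
proof (induction m)
  case 0
  have "(\<lambda>n. if n = 0 then 1 else 0) sums (1::real)" using sums_single[of 0 "\<lambda>_. 1::real"] by simp
  moreover have "(\<lambda>n. pc 0 n * t ^ n) = (\<lambda>n. if n = 0 then 1 else 0)" by auto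
  ultimately show ?case by simp
next
  case (Suc m)
  define g where "g n = (if Suc m dvd n then 1 else 0) * t ^ n" for n
  have G: "g sums (1 / (1 - t ^ Suc m))" unfolding g_def by (rule geom_dvd_sums[OF t]) simp
  have n1: "summable (\<lambda>n. norm (pc m n * t ^ n))"
    using sums_summable[OF Suc.IH] t by (simp add: abs_mult pc_nonneg abs_of_nonneg)
  have n2: "summable (\<lambda>n. norm (g n))"
  proof -
    have "(\<lambda>n. norm (g n)) = g" using t by (auto simp: g_def abs_mult)
    then show ?thesis using sums_summable[OF G] by simp
  qed
  have C: "(\<lambda>n. \<Sum>i\<le>n. (pc m i * t ^ i) * g (n - i)) sums ((\<Sum>n. pc m n * t ^ n) * (\<Sum>n. g n))"
    by (rule Cauchy_product_sums[OF n1 n2])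
  have "(\<lambda>n. \<Sum>i\<le>n. (pc m i * t ^ i) * g (n - i)) = (\<lambda>n. pc (Suc m) n * t ^ n)"
  proof
    fix n
    have "(\<Sum>i\<le>n. (pc m i * t ^ i) * g (n - i)) = (\<Sum>i\<le>n. pc m i * (if Suc m dvd (n - i) then 1 else 0) * t ^ n)"
    proof (rule sum.cong[OF refl])
      fix i assume "i \<in> {..n}"
      then have "t ^ i * t ^ (n - i) = t ^ n" by (simp add: power_add[symmetric])
      then show "(pc m i * t ^ i) * g (n - i) = pc m i * (if Suc m dvd (n - i) then 1 else 0) * t ^ n"
        unfolding g_def by (simp add: mult_ac)
    qed
    also have "\<dots> = pc (Suc m) n * t ^ n" by (simp add: sum_distrib_right)
    finally show "(\<Sum>i\<le>n. (pc m i * t ^ i) * g (n - i)) = pc (Suc m) n * t ^ n" .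
  qed
  moreover have "(\<Sum>n. pc m n * t ^ n) * (\<Sum>n. g n) = 1 / pf t t (Suc m)"
  proof -
    have e1: "(\<Sum>n. pc m n * t ^ n) = 1 / pf t t m" using sums_unique[OF Suc.IH] by simp
    have e2: "(\<Sum>n. g n) = 1 / (1 - t ^ Suc m)" using sums_unique[OF G] by simp
    show ?thesis unfolding e1 e2 pf_Suc by simp
  qed
  ultimately show ?case using C by simp
qed

lemma pd_sums:
  fixes t :: real
  assumes t: "0 \<le> t" "t < 1"
  shows "(\<lambda>n. pd n * t ^ n) sums (1 / qpoch_inf t t)"
proof -
  have t': "\<bar>t\<bar> < 1" using t by simp
  define P where "P = qpoch_inf t t"
  have P: "P > 0" using qp_pos[OF t' t'] by (simp add: P_def)
  have pfP: "P \<le> pf t t m" "0 < pf t t m" for m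
    using pf_ge[of t t m] pf_pos[OF t' t', of m] t by (auto simp: P_def)
  have summ: "summable (\<lambda>n. pd n * t ^ n)"
  proof (rule bounded_imp_summable)
    show "0 \<le> pd n * t ^ n" for n using pd_ge1[of n] t by simp
    fix N
    have "(\<Sum>n\<le>N. pd n * t ^ n) = (\<Sum>n\<le>N. pc N n * t ^ n)"
      by (rule sum.cong[OF refl]) (simp add: pc_eq_pd)
    also have "\<dots> \<le> (\<Sum>n. pc N n * t ^ n)"
      by (rule sum_le_suminf[OF sums_summable[OF pc_sums[OF t]]]) (auto simp: pc_nonneg t)
    also have "\<dots> = 1 / pf t t N" using sums_unique[OF pc_sums[OF t]] by simp
    also have "\<dots> \<le> 1 / P" using pfP P by (intro divide_left_mono) auto
    finally show "(\<Sum>n\<le>N. pd n * t ^ n) \<le> 1 / P" .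
  qed
  define a where "a n m = pc m n * t ^ n" for n m
  have lim_a: "(\<lambda>m. a n m) \<longlonglongrightarrow> pd n * t ^ n" for n
  proof -
    have "\<forall>\<^sub>F m in sequentially. pd n * t ^ n = a n m"
      using eventually_ge_at_top[of n] by eventually_elim (simp add: a_def pc_eq_pd)
    then show ?thesis by (rule Lim_transform_eventually[OF tendsto_const])
  qed
  have ev: "eventually (\<lambda>(n,m). norm (a n m) \<le> pd n * t ^ n) (at_top \<times>\<^sub>F sequentially)"
    by (intro always_eventually) (auto simp: a_def abs_mult pc_nonneg t pc_le_pd intro!: mult_right_mono)
  have T: "(\<lambda>m. suminf (\<lambda>n. a n m)) \<longlonglongrightarrow> (\<Sum>n. pd n * t ^ n)"
    using tannerys_theorem[where a=a and b="\<lambda>n. pd n * t ^ n" and M="\<lambda>n. pd n * t ^ n" and F=sequentially,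
        OF lim_a ev summ] by simp
  have "(\<lambda>m. suminf (\<lambda>n. a n m)) = (\<lambda>m. 1 / pf t t m)"
    using sums_unique[OF pc_sums[OF t]] by (simp add: a_def)
  moreover have "(\<lambda>m. 1 / pf t t m) \<longlonglongrightarrow> 1 / P"
    using P qp_lim[OF t'] by (intro tendsto_intros) (auto simp: P_def)
  ultimately have "(\<Sum>n. pd n * t ^ n) = 1 / P" using T LIMSEQ_unique by metis
  then show ?thesis using summable_sums[OF summ] by (simp add: P_def)
qed



lemma powser_unique:
  fixes c :: "nat \<Rightarrow> real"
  assumes S: "\<And>x. x \<noteq> 0 \<Longrightarrow> \<bar>x\<bar> < 1 \<Longrightarrow> (\<lambda>n. c n * x ^ n) sums 0"
  shows "c n = 0"
proof (induction n rule: less_induct)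
  case (less n)
  have S2: "(\<lambda>k. c (k + n) * x ^ k) sums 0" if x: "x \<noteq> 0" "norm x < 1" for x :: real
  proof -
    have "(\<lambda>k. c k * x ^ k) sums 0" using S x by simp
    then have "(\<lambda>k. c (k + n) * x ^ (k + n)) sums (0 - (\<Sum>k<n. c k * x ^ k))"
      by (rule sums_split_initial_segment)
    moreover have "(\<Sum>k<n. c k * x ^ k) = 0" using less.IH by simp
    ultimately have "(\<lambda>k. c (k + n) * x ^ (k + n)) sums 0" by simp
    then have "(\<lambda>k. c (k + n) * x ^ (k + n) / x ^ n) sums (0 / x ^ n)" by (rule sums_divide)
    moreover have "c (k + n) * x ^ (k + n) / x ^ n = c (k + n) * x ^ k" for k
      using x by (simp add: power_add)
    ultimately show ?thesis by simp
  qed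
  have "((\<lambda>x::real. 0::real) \<longlongrightarrow> c (0 + n)) (at (0::real))"
    by (rule powser_limit_0_strong[of 1 "\<lambda>k. c (k + n)" "\<lambda>x. 0"]) (simp_all add: S2)
  then have L: "((\<lambda>x::real. 0::real) \<longlongrightarrow> c n) (at (0::real))" by simp
  have L0: "((\<lambda>x::real. 0::real) \<longlongrightarrow> 0) (at (0::real))" by (rule tendsto_const)
  have "c n = 0" using tendsto_unique[OF trivial_limit_at L L0] .
  then show ?case .
qed

definition tc :: "nat \<Rightarrow> real" where
  "tc n = (\<Sum>j\<le>n. if j\<^sup>2 = n then w j * (- 1) ^ j else 0)"

lemma tc_sq: "tc (j\<^sup>2) = w j * (- 1) ^ j"
proof -
  have "tc (j\<^sup>2) = (\<Sum>i\<le>j\<^sup>2. if i = j then w i * (- 1) ^ i else 0)"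
    unfolding tc_def
    by (rule sum.cong[OF refl]) (auto simp: power_eq_iff_eq_base)
  also have "\<dots> = w j * (- 1) ^ j"
  proof -
    have "j \<le> j\<^sup>2" by (simp add: power2_eq_square le_square)
    then show ?thesis by (simp add: sum.delta)
  qed
  finally show ?thesis .
qed

lemma tc_nsq: "(\<And>j. j\<^sup>2 \<noteq> n) \<Longrightarrow> tc n = 0"
  unfolding tc_def by (rule sum.neutral) auto

lemma tc_cases: "tc n = 0 \<or> (\<exists>j. n = j\<^sup>2 \<and> tc n = w j * (- 1) ^ j)"
  using tc_sq tc_nsq by metis

lemma tc_abs: "\<bar>tc n\<bar> \<le> 2"
  using tc_cases[of n] w_bound by (auto simp: abs_mult)

lemma theta_sums:
  assumes "\<bar>q::real\<bar> < 1"
  shows "(\<lambda>n. tc n * q ^ n) sums theta q"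
proof -
  have "(\<lambda>j. w j * ((- 1) ^ j * q ^ (j\<^sup>2))) sums theta q"
    unfolding theta_def by (rule summable_sums[OF theta_summable[OF assms]])
  then have "(\<lambda>j. (\<lambda>n. tc n * q ^ n) (j\<^sup>2)) sums theta q"
    by (simp add: tc_sq mult_ac)
  moreover have "strict_mono (\<lambda>j::nat. j\<^sup>2)"
    by (auto simp: strict_mono_def power_strict_mono)
  ultimately show ?thesis
    by (subst (asm) sums_mono_reindex) (auto intro: tc_nsq)
qed

lemma tc_norm_summable:
  assumes "\<bar>q::real\<bar> < 1"
  shows "summable (\<lambda>n. norm (tc n * q ^ n))"
proof (rule summable_comparison_test)
  show "summable (\<lambda>n. 2 * \<bar>q\<bar> ^ n)" using assms by (auto intro!: summable_mult summable_geometric)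
  show "\<exists>N. \<forall>n\<ge>N. norm (norm (tc n * q ^ n)) \<le> 2 * \<bar>q\<bar> ^ n"
    using tc_abs by (auto simp: abs_mult power_abs intro!: mult_right_mono)
qed

definition cc :: "nat \<Rightarrow> real" where
  "cc k = (\<Sum>i\<le>k. tc i * tc (k - i))"

lemma theta2_sums:
  assumes "\<bar>q::real\<bar> < 1"
  shows "(\<lambda>k. cc k * q ^ k) sums (theta q)\<^sup>2"
    and "summable (\<lambda>k. norm (cc k * q ^ k))"
proof -
  have C: "(\<lambda>k. \<Sum>i\<le>k. (tc i * q ^ i) * (tc (k - i) * q ^ (k - i))) sums ((\<Sum>n. tc n * q ^ n) * (\<Sum>n. tc n * q ^ n))"
    by (rule Cauchy_product_sums[OF tc_norm_summable[OF assms] tc_norm_summable[OF assms]])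
  have eq: "(\<Sum>i\<le>k. (tc i * q ^ i) * (tc (k - i) * q ^ (k - i))) = cc k * q ^ k" for k
  proof -
    have "(\<Sum>i\<le>k. (tc i * q ^ i) * (tc (k - i) * q ^ (k - i))) = (\<Sum>i\<le>k. tc i * tc (k - i) * q ^ k)"
    proof (rule sum.cong[OF refl])
      fix i assume "i \<in> {..k}"
      then have "q ^ i * q ^ (k - i) = q ^ k" by (simp add: power_add[symmetric])
      then show "(tc i * q ^ i) * (tc (k - i) * q ^ (k - i)) = tc i * tc (k - i) * q ^ k"
        by (simp add: mult_ac)
    qed
    then show ?thesis by (simp add: cc_def sum_distrib_right)
  qed
  show "(\<lambda>k. cc k * q ^ k) sums (theta q)\<^sup>2"
    using C sums_unique[OF theta_sums[OF assms]] by (simp add: eq power2_eq_square)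
  have N: "summable (\<lambda>k. \<Sum>i\<le>k. norm (tc i * q ^ i) * norm (tc (k - i) * q ^ (k - i)))"
    using summable_Cauchy_product[of "\<lambda>n. norm (tc n * q ^ n)" "\<lambda>n. norm (tc n * q ^ n)"]
      tc_norm_summable[OF assms] by simp
  show "summable (\<lambda>k. norm (cc k * q ^ k))"
  proof (rule summable_comparison_test[OF _ N], intro exI allI impI)
    fix k :: nat
    have "norm (cc k * q ^ k) = norm (\<Sum>i\<le>k. (tc i * q ^ i) * (tc (k - i) * q ^ (k - i)))" by (simp add: eq)
    also have "\<dots> \<le> (\<Sum>i\<le>k. norm ((tc i * q ^ i) * (tc (k - i) * q ^ (k - i))))" by (rule norm_sum)
    also have "\<dots> = (\<Sum>i\<le>k. norm (tc i * q ^ i) * norm (tc (k - i) * q ^ (k - i)))"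
      by (rule sum.cong[OF refl]) (rule norm_mult)
    finally show "norm (norm (cc k * q ^ k)) \<le> (\<Sum>i\<le>k. norm (tc i * q ^ i) * norm (tc (k - i) * q ^ (k - i)))" by simp
  qed
qed

definition ec :: "nat \<Rightarrow> real" where
  "ec n = (if 4 dvd n then pd (n div 4) else 0)"

lemma ec_nonneg: "0 \<le> ec n"
  using pd_ge1 by (auto simp: ec_def intro: order_trans[OF zero_le_one])

lemma ec_sums:
  assumes "\<bar>q::real\<bar> < 1"
  shows "(\<lambda>n. ec n * q ^ n) sums (1 / qpoch_inf (q ^ 4) (q ^ 4))"
proof -
  have t: "0 \<le> q ^ 4" "q ^ 4 < 1"
  proof -
    show "0 \<le> q ^ 4" by (simp add: zero_le_even_power)
    have "\<bar>q\<bar> ^ 4 < 1" using assms by (subst power_less_one_iff) auto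
    then have "\<bar>q ^ 4\<bar> < 1" unfolding power_abs .
    then show "q ^ 4 < 1" by simp
  qed
  have "(\<lambda>j. pd j * (q ^ 4) ^ j) sums (1 / qpoch_inf (q ^ 4) (q ^ 4))" by (rule pd_sums[OF t])
  then have "(\<lambda>j. (\<lambda>n. ec n * q ^ n) (4 * j)) sums (1 / qpoch_inf (q ^ 4) (q ^ 4))"
    by (simp add: ec_def power_mult)
  moreover have "strict_mono (\<lambda>j::nat. 4 * j)" by (auto simp: strict_mono_def)
  ultimately show ?thesis
    by (subst (asm) sums_mono_reindex) (auto simp: ec_def elim!: dvdE)
qed

lemma ec_norm_summable:
  assumes "\<bar>q::real\<bar> < 1"
  shows "summable (\<lambda>n. norm (ec n * q ^ n))"
proof -
  have "summable (\<lambda>n. ec n * \<bar>q\<bar> ^ n)" using sums_summable[OF ec_sums[of "\<bar>q\<bar>"]] assms by simp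
  then show ?thesis using ec_nonneg by (simp add: abs_mult power_abs)
qed

definition co :: "nat \<Rightarrow> real" where
  "co k = (\<Sum>i\<le>k. cc i * ec (k - i))"

lemma F_sums:
  assumes "q \<noteq> 0" "\<bar>q::real\<bar> < 1"
  shows "(\<lambda>k. co k * q ^ k) sums F q"
proof -
  have C: "(\<lambda>k. \<Sum>i\<le>k. (cc i * q ^ i) * (ec (k - i) * q ^ (k - i))) sums ((\<Sum>n. cc n * q ^ n) * (\<Sum>n. ec n * q ^ n))"
    by (rule Cauchy_product_sums[OF theta2_sums(2)[OF assms(2)] ec_norm_summable[OF assms(2)]])
  have eq: "(\<Sum>i\<le>k. (cc i * q ^ i) * (ec (k - i) * q ^ (k - i))) = co k * q ^ k" for k
  proof -
    have "(\<Sum>i\<le>k. (cc i * q ^ i) * (ec (k - i) * q ^ (k - i))) = (\<Sum>i\<le>k. cc i * ec (k - i) * q ^ k)"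
    proof (rule sum.cong[OF refl])
      fix i assume "i \<in> {..k}"
      then have "q ^ i * q ^ (k - i) = q ^ k" by (simp add: power_add[symmetric])
      then show "(cc i * q ^ i) * (ec (k - i) * q ^ (k - i)) = cc i * ec (k - i) * q ^ k"
        by (simp add: mult_ac)
    qed
    then show ?thesis by (simp add: co_def sum_distrib_right)
  qed
  have "(\<Sum>n. cc n * q ^ n) * (\<Sum>n. ec n * q ^ n) = F q"
  proof -
    have e1: "(\<Sum>n. ec n * q ^ n) = 1 / qpoch_inf (q ^ 4) (q ^ 4)" using sums_unique[OF ec_sums[OF assms(2)]] by simp
    have e2: "(\<Sum>n. cc n * q ^ n) = (theta q)\<^sup>2" using sums_unique[OF theta2_sums(1)[OF assms(2)]] by simp
    show ?thesis unfolding e1 e2 F_eq[OF assms] by simp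
  qed
  then show ?thesis using C by (simp add: eq)
qed



lemma m1: "(- 1 :: real) ^ n = (if even n then 1 else - 1)"
  by (simp add: neg_one_even_power neg_one_odd_power)

lemma sq_parity: "even (j\<^sup>2 + j :: nat)"
  by (simp add: power2_eq_square)

lemma tc_sign: "0 \<le> (- 1) ^ n * tc n"
proof (cases "tc n = 0")
  case False
  then obtain j where j: "n = j\<^sup>2" "tc n = w j * (- 1) ^ j" using tc_cases[of n] by auto
  have "(- 1 :: real) ^ (j\<^sup>2) * (- 1) ^ j = (- 1) ^ (j\<^sup>2 + j)" by (simp add: power_add)
  also have "\<dots> = 1" using sq_parity[of j] by (simp add: neg_one_even_power)
  finally have "(- 1) ^ n * tc n = w j" using j by (simp add: mult.assoc[symmetric])
  then show ?thesis using w_bound[of j] by simp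
qed simp

lemma split_sign: "i \<le> k \<Longrightarrow> (- 1 :: real) ^ k = (- 1) ^ i * (- 1) ^ (k - i)"
  by (simp add: power_add[symmetric])

lemma cc_sign: "0 \<le> (- 1) ^ k * cc k"
proof -
  have "(- 1) ^ k * cc k = (\<Sum>i\<le>k. ((- 1) ^ i * tc i) * ((- 1) ^ (k - i) * tc (k - i)))"
    unfolding cc_def sum_distrib_left
    by (rule sum.cong[OF refl]) (simp add: split_sign mult_ac)
  also have "\<dots> \<ge> 0" by (intro sum_nonneg mult_nonneg_nonneg tc_sign)
  finally show ?thesis .
qed

lemma sq_mod4: "(j\<^sup>2 :: nat) mod 4 = 0 \<or> j\<^sup>2 mod 4 = 1"
proof -
  have "j\<^sup>2 mod 4 = ((j mod 4)\<^sup>2) mod 4" by (simp add: power_mod)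
  moreover have "j mod 4 < 4" by simp
  then have "j mod 4 = 0 \<or> j mod 4 = 1 \<or> j mod 4 = 2 \<or> j mod 4 = 3" by arith
  ultimately show ?thesis by (auto simp: power2_eq_square)
qed

lemma cc_3: "k mod 4 = 3 \<Longrightarrow> cc k = 0"
  unfolding cc_def
proof (rule sum.neutral, intro ballI)
  fix i assume k: "k mod 4 = 3" and i: "i \<in> {..k}"
  show "tc i * tc (k - i) = 0"
  proof (rule ccontr)
    assume "tc i * tc (k - i) \<noteq> 0"
    then have "tc i \<noteq> 0" "tc (k - i) \<noteq> 0" by auto
    then obtain a b where ab: "i = a\<^sup>2" "k - i = b\<^sup>2" using tc_cases by metis
    then have "k = a\<^sup>2 + b\<^sup>2" using i by simp
    then have "k mod 4 = (a\<^sup>2 mod 4 + b\<^sup>2 mod 4) mod 4" by (simp add: mod_add_eq)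
    then show False using k sq_mod4[of a] sq_mod4[of b] by auto
  qed
qed

lemma tc_vals: "tc 0 = 1" "tc 1 = -2" "tc 2 = 0"
proof -
  show "tc 0 = 1" using tc_sq[of 0] by (simp add: w_def)
  show "tc 1 = -2" using tc_sq[of 1] by (simp add: w_def)
  show "tc 2 = 0"
  proof (rule tc_nsq)
    fix j :: nat
    show "j\<^sup>2 \<noteq> 2"
    proof (cases "j \<le> 1")
      case True then have "j = 0 \<or> j = 1" by auto
      then show ?thesis by auto
    next
      case False then have "2 \<le> j" by simp
      then have "2\<^sup>2 \<le> j\<^sup>2" by (rule power_mono) simp
      then show ?thesis by auto
    qed
  qed
qed

lemma cc_vals: "cc 0 = 1" "cc 1 = -4" "cc 2 = 4"
proof -
  have t1: "tc (Suc 0) = -2" and t2: "tc (Suc (Suc 0)) = 0" using tc_vals by (simp_all add: numeral_2_eq_2)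
  show "cc 0 = 1" "cc 1 = -4" "cc 2 = 4" by (simp_all add: cc_def tc_vals t1 t2 numeral_2_eq_2)
qed

lemma dvd4_mod: "i \<le> n \<Longrightarrow> 4 dvd (n - i) \<Longrightarrow> n mod 4 = i mod (4::nat)"
proof -
  assume "i \<le> n" "4 dvd (n - i)"
  then obtain k where "n - i = 4 * k" by (auto elim: dvdE)
  then have "n = i + 4 * k" using \<open>i \<le> n\<close> by simp
  then show ?thesis by simp
qed

lemma mod4_dvd: "n mod 4 = r \<Longrightarrow> r \<le> n \<and> 4 dvd (n - (r::nat))"
proof -
  assume h: "n mod 4 = r"
  have "r \<le> n" using h mod_less_eq_dividend[of n 4] by simp
  moreover have "n - n mod 4 = 4 * (n div 4)" by (simp add: minus_mod_eq_mult_div)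
  ultimately show ?thesis using h by simp
qed

lemma ec_pos: "4 dvd n \<Longrightarrow> 1 \<le> ec n"
  by (simp add: ec_def pd_ge1)

lemma term_eq:
  assumes "i \<le> n"
  shows "(- 1) ^ n * (cc i * ec (n - i)) = ((- 1) ^ i * cc i) * ec (n - i)"
proof (cases "4 dvd (n - i)")
  case True
  then have "even (n - i)" using dvd_trans[of 2 4 "n - i"] by simp
  then have "(- 1 :: real) ^ n = (- 1) ^ i" using split_sign[OF assms] by (simp add: neg_one_even_power)
  then show ?thesis by simp
next
  case False then show ?thesis by (simp add: ec_def)
qed

lemma co_sign_sum: "(- 1) ^ n * co n = (\<Sum>i\<le>n. ((- 1) ^ i * cc i) * ec (n - i))"
  unfolding co_def sum_distrib_left by (rule sum.cong[OF refl]) (simp add: term_eq)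

lemma co_ge_term:
  assumes "i \<le> n"
  shows "((- 1) ^ i * cc i) * ec (n - i) \<le> (- 1) ^ n * co n"
  unfolding co_sign_sum
  by (rule member_le_sum) (use assms in \<open>auto intro!: mult_nonneg_nonneg cc_sign ec_nonneg\<close>)

lemma co_signs:
  "(n mod 4 = 0 \<or> n mod 4 = 2 \<longrightarrow> co n > 0) \<and> (n mod 4 = 1 \<longrightarrow> co n < 0) \<and> (n mod 4 = 3 \<longrightarrow> co n = 0)"
proof (intro conjI impI)
  assume "n mod 4 = 0 \<or> n mod 4 = 2"
  then show "co n > 0"
  proof
    assume h: "n mod 4 = 0"
    then have "4 dvd n" using mod4_dvd[OF h] by simp
    then have "even n" using dvd_trans[of 2 4 n] by simp
    have "1 \<le> (- 1) ^ n * co n" using co_ge_term[of 0 n] ec_pos[OF \<open>4 dvd n\<close>] by (simp add: cc_vals)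
    then show ?thesis using \<open>even n\<close> by (simp add: neg_one_even_power)
  next
    assume h: "n mod 4 = 2"
    have n2: "2 \<le> n" and d: "4 dvd (n - 2)" using mod4_dvd[OF h] by auto
    have "4 \<le> (- 1) ^ n * co n" using co_ge_term[of 2 n] ec_pos[OF d] n2 by (simp add: cc_vals)
    moreover have "even n"
    proof -
      have "even (n - 2)" using dvd_trans[of 2 4 "n - 2"] d by simp
      then show ?thesis using n2 by simp
    qed
    ultimately show ?thesis by (simp add: neg_one_even_power)
  qed
next
  assume h: "n mod 4 = 1"
  have n1: "1 \<le> n" and d: "4 dvd (n - 1)" using mod4_dvd[OF h] by auto
  have c1: "cc (Suc 0) = -4" using cc_vals(2) by simp
  have "4 \<le> (- 1) ^ n * co n" using co_ge_term[of 1 n] ec_pos[OF d] n1 by (simp add: c1)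
  moreover have "odd n"
  proof -
    have "even (n - 1)" using dvd_trans[of 2 4 "n - 1"] d by simp
    then show ?thesis using n1 by simp
  qed
  ultimately show "co n < 0" by (simp add: neg_one_odd_power)
next
  assume h: "n mod 4 = 3"
  show "co n = 0" unfolding co_def
  proof (rule sum.neutral, intro ballI)
    fix i assume i: "i \<in> {..n}"
    show "cc i * ec (n - i) = 0"
    proof (cases "4 dvd (n - i)")
      case True
      then have "i mod 4 = 3" using h i dvd4_mod[of i n] by simp
      then show ?thesis by (simp add: cc_3)
    next
      case False then show ?thesis by (simp add: ec_def)
    qed
  qed
qed


theorem theorem1p3:
  fixes a :: "nat \<Rightarrow> real"
  assumes expansion: "\<forall>q::real. \<bar>q\<bar> < 1 \<longrightarrow> (\<lambda>n. a n * q ^ n) sums F q"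
  shows "\<forall>n. (n mod 4 = 0 \<or> n mod 4 = 2 \<longrightarrow> a n > 0)
           \<and> (n mod 4 = 1 \<longrightarrow> a n < 0)
           \<and> (n mod 4 = 3 \<longrightarrow> a n = 0)"
proof -
  have eq: "a n = co n" for n
  proof -
    have "(\<lambda>k. a k - co k) n = 0"
    proof (rule powser_unique)
      fix x :: real assume x: "x \<noteq> 0" "\<bar>x\<bar> < 1"
      have "(\<lambda>k. a k * x ^ k - co k * x ^ k) sums (F x - F x)"
        using expansion x F_sums[OF x] by (intro sums_diff) auto
      then show "(\<lambda>k. (a k - co k) * x ^ k) sums 0" by (simp add: left_diff_distrib)
    qed
    then show ?thesis by simp
  qed
  show ?thesis using co_signs eq by simp
qed

end
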